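(* Let $F:\mathbb{R}^d\to\mathbb{R}$ be quadratic with symmetric positive definite Hessian $H_F$, minimizer $w_*$ and $R_F^2=\mathrm{Tr}(H_F)$. Let $(\xi_k)_{k\ge1}$ be i.i.d. zero-centered random fields with $\xi_k^{\mathrm{add}}=\xi_k(0)$, $\mathbb{E}\|\xi_1^{\mathrm{add}}\|^2\le\mathcal{A}<\infty$ and $\mathfrak{C}_{\mathrm{ania}}=\mathbb{E}[\xi_1^{\mathrm{add}}\xi_1^{\mathrm{add}\top}]$. Let $\gamma>0$ with $\gamma R_F^2\le1$, $\eta_0\in\mathbb{R}^d$, and define $\eta_0^0=\eta_0$, $\eta_k^0=(\mathrm{I}_d-\gamma H_F)\eta_{k-1}^0+\gamma\xi_k^{\mathrm{add}}$ for $k\ge1$, and $\overline{\eta}_{K-1}^0=\frac1K\sum_{k=0}^{K-1}\eta_k^0$. Then for every $K\ge1$, $$\big(\mathbb{E}\|H_F^{1/2}\overline{\eta}_{K-1}^0\|^2\big)^{1/2}\le\frac1{\sqrt K}\Big(\frac{\|H_F^{-1/2}\eta_0\|}{\gamma\sqrt K}\wedge\frac{\|\eta_0\|}{\sqrt\gamma}+\sqrt{\mathrm{Tr}(\mathfrak{C}_{\mathrm{ania}}H_F^{-1})}\Big).$$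
   Context: Zero-centered means $\mathbb{E}\xi_k(z)=0$ for every $z$; $a\wedge b=\min(a,b)$. *)

theory Defs
  imports "HOL-Analysis.Analysis" "HOL-Probability.Probability"
begin

definition sym_pos_def :: "real^'n^'n \<Rightarrow> bool" where
  "sym_pos_def A \<longleftrightarrow> transpose A = A \<and> (\<forall>x. x \<noteq> 0 \<longrightarrow> x \<bullet> (A *v x) > 0)"

definition sym_psd :: "real^'n^'n \<Rightarrow> bool" where
  "sym_psd A \<longleftrightarrow> transpose A = A \<and> (\<forall>x. x \<bullet> (A *v x) \<ge> 0)"

definition msqrt :: "real^'n^'n \<Rightarrow> real^'n^'n" where
  "msqrt A = (THE S. sym_psd S \<and> S ** S = A)"

fun eta0_seq :: "real \<Rightarrow> real^'n^'n \<Rightarrow> (nat \<Rightarrow> 'a \<Rightarrow> real^'n) \<Rightarrow> real^'n \<Rightarrow> nat \<Rightarrow> 'a \<Rightarrow> real^'n" where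
  "eta0_seq \<gamma> H xa e0 0 \<omega> = e0"
| "eta0_seq \<gamma> H xa e0 (Suc k) \<omega> =
     (mat 1 - \<gamma> *\<^sub>R H) *v eta0_seq \<gamma> H xa e0 k \<omega> + \<gamma> *\<^sub>R xa (Suc k) \<omega>"

definition eta0_bar :: "real \<Rightarrow> real^'n^'n \<Rightarrow> (nat \<Rightarrow> 'a \<Rightarrow> real^'n) \<Rightarrow> real^'n \<Rightarrow> nat \<Rightarrow> 'a \<Rightarrow> real^'n" where
  "eta0_bar \<gamma> H xa e0 K \<omega> = (1 / real K) *\<^sub>R (\<Sum>k<K. eta0_seq \<gamma> H xa e0 k \<omega>)"

end

theory Submission
  imports Defs
begin
lemma quad_zero:
  fixes a b :: real
  assumes "\<And>t. 2*t*a + t^2*b \<le> 0" shows "a = 0"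
proof -
  define c where "c = \<bar>b\<bar> + 1"
  define t where "t = a / c"
  have p: "c > 0" unfolding c_def by simp
  have tc: "t * c = a" unfolding t_def using p by simp
  have h: "2*t*a + t^2*b \<le> 0" by (rule assms)
  have "c^2 * (2*t*a + t^2*b) = 2*c*(t*c)*a + (t*c)^2*b"
    by (simp add: power2_eq_square algebra_simps)
  also have "\<dots> = a^2 * (2*c + b)" unfolding tc by (simp add: power2_eq_square algebra_simps)
  finally have e: "c^2 * (2*t*a + t^2*b) = a^2 * (2*c + b)" .
  have "c^2 * (2*t*a + t^2*b) \<le> 0" using h by (simp add: mult_nonneg_nonpos)
  hence "a^2 * (2*c + b) \<le> 0" using e by simp
  moreover have "2*c + b > 0" unfolding c_def by (cases "b \<ge> 0") auto
  ultimately have "a^2 \<le> 0" by (simp add: mult_le_0_iff)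
  thus ?thesis by simp
qed

lemma inner_sym_mat:
  fixes B :: "real^'n^'n"
  assumes "transpose B = B"
  shows "x \<bullet> (B *v y) = (B *v x) \<bullet> y"
  by (metis assms dot_lmul_matrix inner_commute vector_transpose_matrix)

lemma eigen_in_subspace:
  fixes B :: "real^'n^'n"
  assumes sym: "transpose B = B" and V: "subspace V" and inv: "\<And>x. x \<in> V \<Longrightarrow> B *v x \<in> V"
    and ne: "x0 \<in> V" "x0 \<noteq> 0"
  shows "\<exists>u\<in>V. norm u = 1 \<and> B *v u = (u \<bullet> (B *v u)) *\<^sub>R u"
proof -
  let ?S = "V \<inter> sphere 0 1"
  have cS: "compact ?S"
    by (intro closed_Int_compact closed_subspace V compact_sphere)
  have "x0 /\<^sub>R norm x0 \<in> ?S" using ne V by (auto simp: subspace_scale)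
  hence neS: "?S \<noteq> {}" by blast
  have cont: "continuous_on ?S (\<lambda>x. x \<bullet> (B *v x))"
    by (intro continuous_intros continuous_on_id linear_continuous_on) (auto intro: bounded_linearI' matrix_vector_right_distrib matrix_vector_mult_scaleR)
  obtain u where uS: "u \<in> ?S" and umax: "\<And>y. y \<in> ?S \<Longrightarrow> y \<bullet> (B *v y) \<le> u \<bullet> (B *v u)"
    using continuous_attains_sup[OF cS neS cont] by blast
  define l where "l = u \<bullet> (B *v u)"
  have uV: "u \<in> V" and un: "norm u = 1" using uS by auto
  have max2: "x \<bullet> (B *v x) \<le> l * (norm x)^2" if "x \<in> V" for x
  proof (cases "x = 0")
    case True thus ?thesis by simp
  next
    case False
    hence "x /\<^sub>R norm x \<in> ?S" using that V by (auto simp: subspace_scale)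
    hence "(x /\<^sub>R norm x) \<bullet> (B *v (x /\<^sub>R norm x)) \<le> l" using umax l_def by blast
    hence "(x \<bullet> (B *v x)) / (norm x)^2 \<le> l"
      by (simp add: matrix_vector_mult_scaleR power2_eq_square divide_inverse mult.assoc mult.commute mult.left_commute)
    thus ?thesis using False by (simp add: divide_le_eq mult.commute)
  qed
  have orth: "w \<bullet> (B *v u) = 0" if wV: "w \<in> V" and wu: "w \<bullet> u = 0" for w
  proof (rule quad_zero[where b = "w \<bullet> (B *v w) - l * (norm w)^2"])
    fix t :: real
    have "u + t *\<^sub>R w \<in> V" using uV wV V by (simp add: subspace_add subspace_scale)
    hence "(u + t *\<^sub>R w) \<bullet> (B *v (u + t *\<^sub>R w)) \<le> l * (norm (u + t *\<^sub>R w))^2" by (rule max2)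
    moreover have "(norm (u + t *\<^sub>R w))^2 = 1 + t^2 * (norm w)^2"
      using un wu by (simp only: power2_norm_eq_inner) (simp add: norm_eq_sqrt_inner inner_add_left inner_add_right inner_commute power2_eq_square algebra_simps)
    moreover have "(u + t *\<^sub>R w) \<bullet> (B *v (u + t *\<^sub>R w)) = l + 2*t*(w \<bullet> (B *v u)) + t^2 * (w \<bullet> (B *v w))"
      using inner_sym_mat[OF sym, of u w] l_def
      by (simp add: matrix_vector_right_distrib matrix_vector_mult_scaleR inner_add_left inner_add_right power2_eq_square algebra_simps inner_commute[of "B *v u" w])
    ultimately show "2 * t * (w \<bullet> (B *v u)) + t\<^sup>2 * (w \<bullet> (B *v w) - l * (norm w)\<^sup>2) \<le> 0"
      by (simp add: algebra_simps)
  qed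
  define w where "w = B *v u - l *\<^sub>R u"
  have wV: "w \<in> V" unfolding w_def using inv[OF uV] uV V by (simp add: subspace_diff subspace_scale)
  have uu: "u \<bullet> u = 1" using un by (simp add: norm_eq_sqrt_inner)
  have "w \<bullet> u = (B *v u) \<bullet> u - l * (u \<bullet> u)" unfolding w_def by (simp add: inner_diff_left)
  hence wu: "w \<bullet> u = 0" unfolding l_def using uu by (simp add: inner_commute)
  have "w \<bullet> w = w \<bullet> (B *v u) - l * (w \<bullet> u)" unfolding w_def by (simp add: inner_diff_right)
  also have "\<dots> = 0" using orth[OF wV wu] wu by simp
  finally have "w = 0" by simp
  thus ?thesis using uV un l_def w_def by auto
qed

definition dmat :: "('n \<Rightarrow> real) \<Rightarrow> real^'n^'n" where
  "dmat l = (\<chi> i j. if i = j then l i else 0)"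

lemma eigenbasis_subspace:
  fixes B :: "real^'n^'n"
  assumes sym: "transpose B = B"
  shows "subspace V \<Longrightarrow> (\<forall>x\<in>V. B *v x \<in> V) \<Longrightarrow>
    \<exists>U. U \<subseteq> V \<and> finite U \<and> pairwise orthogonal U \<and>
        (\<forall>u\<in>U. norm u = 1 \<and> B *v u = (u \<bullet> (B *v u)) *\<^sub>R u) \<and> V \<subseteq> span U"
proof (induction "dim V" arbitrary: V rule: less_induct)
  case less
  show ?case
  proof (cases "V \<subseteq> {0}")
    case True
    thus ?thesis by (intro exI[of _ "{}"]) auto
  next
    case False
    then obtain x0 where x0: "x0 \<in> V" "x0 \<noteq> 0" by auto
    obtain u where uV: "u \<in> V" and un: "norm u = 1" and ue: "B *v u = (u \<bullet> (B *v u)) *\<^sub>R u"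
      using eigen_in_subspace[OF sym less.prems(1) _ x0] less.prems(2) by blast
    define l where "l = u \<bullet> (B *v u)"
    have uu: "u \<bullet> u = 1" using un by (simp add: norm_eq_sqrt_inner)
    define W where "W = V \<inter> {x. u \<bullet> x = 0}"
    have sW: "subspace W" unfolding W_def
      by (intro subspace_inter less.prems(1) subspace_hyperplane)
    have iW: "\<forall>x\<in>W. B *v x \<in> W"
    proof
      fix x assume "x \<in> W"
      hence xV: "x \<in> V" and xu: "u \<bullet> x = 0" by (auto simp: W_def)
      have "u \<bullet> (B *v x) = (B *v u) \<bullet> x" by (rule inner_sym_mat[OF sym])
      also have "\<dots> = l * (u \<bullet> x)" unfolding l_def by (subst ue) simp
      finally show "B *v x \<in> W" using xu less.prems(2) xV by (simp add: W_def)
    qed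
    have "u \<notin> W" using uu by (simp add: W_def)
    hence "W \<subset> V" using uV unfolding W_def by blast
    hence "span W \<subset> span V" by (metis span_eq_iff sW less.prems(1))
    hence "dim W < dim V" by (rule dim_psubset)
    then obtain U where U: "U \<subseteq> W" "finite U" "pairwise orthogonal U"
      "\<forall>u\<in>U. norm u = 1 \<and> B *v u = (u \<bullet> (B *v u)) *\<^sub>R u" "W \<subseteq> span U"
      using less.hyps[OF _ sW iW] by blast
    have uU: "u \<notin> U" using U(1) uu by (auto simp: W_def)
    show ?thesis
    proof (intro exI[of _ "insert u U"] conjI)
      show "insert u U \<subseteq> V" using U(1) uV by (auto simp: W_def)
      show "finite (insert u U)" using U(2) by simp
      show "pairwise orthogonal (insert u U)"
        using U(1,3) uU by (auto simp: pairwise_insert W_def orthogonal_def inner_commute)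
      show "\<forall>v\<in>insert u U. norm v = 1 \<and> B *v v = (v \<bullet> (B *v v)) *\<^sub>R v"
        using U(4) un ue by auto
      show "V \<subseteq> span (insert u U)"
      proof
        fix x assume xV: "x \<in> V"
        have "x - (u \<bullet> x) *\<^sub>R u \<in> W"
          using xV uV less.prems(1) uu by (auto simp: W_def subspace_diff subspace_scale inner_diff_right)
        hence "x - (u \<bullet> x) *\<^sub>R u \<in> span (insert u U)"
          using U(5) span_mono[of U "insert u U"] by auto
        moreover have "(u \<bullet> x) *\<^sub>R u \<in> span (insert u U)"
          by (intro span_mul span_base) simp
        ultimately have "x - (u \<bullet> x) *\<^sub>R u + (u \<bullet> x) *\<^sub>R u \<in> span (insert u U)"
          by (rule span_add)
        thus "x \<in> span (insert u U)" by simp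
      qed
    qed
  qed
qed

lemma spectral:
  fixes B :: "real^'n^'n"
  assumes sym: "transpose B = B"
  shows "\<exists>(P::real^'n^'n) l. P ** transpose P = mat 1 \<and> transpose P ** P = mat 1 \<and> B = transpose P ** dmat l ** P"
proof -
  obtain U where U: "finite U" "pairwise orthogonal U"
      "\<forall>u\<in>U. norm u = 1 \<and> B *v u = (u \<bullet> (B *v u)) *\<^sub>R u" "UNIV \<subseteq> span U"
    using eigenbasis_subspace[OF sym, of UNIV] by auto
  have "0 \<notin> U" using U(3) by force
  hence ind: "independent U" using U(2) pairwise_orthogonal_independent by blast
  have "card U = dim (span U)" using dim_span_eq_card_independent[OF ind] by simp
  also have "span U = UNIV" using U(4) by auto
  finally have cU: "card U = CARD('n)" by simp
  obtain g where g: "bij_betw g (UNIV::'n set) U"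
    using finite_same_card_bij[of "UNIV::'n set" U] U(1) cU by auto
  define P :: "real^'n^'n" where "P = (\<chi> i. g i)"
  define l where "l i = g i \<bullet> (B *v g i)" for i
  have Pi: "P $ i = g i" for i by (simp add: P_def)
  have gU: "g i \<in> U" for i using g by (auto simp: bij_betw_def)
  have gg: "g i \<bullet> g j = (if i = j then 1 else 0)" for i j
  proof (cases "i = j")
    case True
    thus ?thesis using U(3) gU[of i] by (simp add: norm_eq_sqrt_inner)
  next
    case False
    hence "g i \<noteq> g j" using g by (auto simp: bij_betw_def inj_on_def)
    thus ?thesis using U(2) gU[of i] gU[of j] False by (auto simp: pairwise_def orthogonal_def)
  qed
  have PP: "P ** transpose P = mat 1"
    using gg by (simp add: matrix_matrix_mult_def transpose_def mat_def Pi inner_vec_def vec_eq_iff)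
  hence PP2: "transpose P ** P = mat 1" using matrix_left_right_inverse by blast
  have ge: "B *v g i = l i *\<^sub>R g i" for i using U(3) gU[of i] l_def by auto
  have "B ** transpose P = transpose P ** dmat l"
  proof -
    have "(B ** transpose P) $ a $ i = (transpose P ** dmat l) $ a $ i" for a i
    proof -
      have "(B ** transpose P) $ a $ i = (B *v g i) $ a"
        by (simp add: matrix_matrix_mult_def matrix_vector_mult_def transpose_def Pi)
      also have "\<dots> = l i * g i $ a" using ge by simp
      also have "\<dots> = (transpose P ** dmat l) $ a $ i"
        by (simp add: matrix_matrix_mult_def transpose_def dmat_def Pi if_distrib if_distribR sum.delta' cong: if_cong)
      finally show ?thesis .
    qed
    thus ?thesis by (simp add: vec_eq_iff)
  qed
  hence "B = transpose P ** dmat l ** P"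
    by (metis PP2 matrix_mul_assoc matrix_mul_rid)
  thus ?thesis using PP PP2 by (intro exI[of _ P] exI[of _ l]) auto
qed

definition mf :: "real^'n^'n \<Rightarrow> ('n \<Rightarrow> real) \<Rightarrow> (real \<Rightarrow> real) \<Rightarrow> real^'n^'n" where
  "mf P l g = transpose P ** dmat (\<lambda>i. g (l i)) ** P"

lemma sum_if_mult: "(\<Sum>j\<in>(UNIV::'n::finite set). (if i = j then c else 0) * f j) = (c::real) * f i"
proof -
  have "(\<Sum>j\<in>(UNIV::'n set). (if i = j then c else 0) * f j) = (\<Sum>j\<in>UNIV. if i = j then c * f j else 0)"
    by (rule sum.cong) auto
  thus ?thesis by simp
qed

lemma dmat_mv: "(dmat a *v x) $ i = a i * x $ i"
  unfolding dmat_def matrix_vector_mult_def by (simp add: sum_if_mult)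

lemma dmat_mult: "dmat a ** dmat b = dmat (\<lambda>i. a i * b i)"
proof -
  have "(\<Sum>k\<in>UNIV. (if i = k then a i else 0) * (if k = j then b k else 0)) = (if i = j then a i * b i else 0)" for i j
    by (subst sum_if_mult) auto
  thus ?thesis unfolding dmat_def matrix_matrix_mult_def by (simp add: vec_eq_iff)
qed

lemma dmat_transpose: "transpose (dmat a) = dmat a"
  unfolding dmat_def transpose_def by (simp add: vec_eq_iff)

lemma dmat_one: "dmat (\<lambda>_. 1) = mat 1"
  unfolding dmat_def mat_def by simp

lemma mf_cong: "(\<And>i. g (l i) = h (l i)) \<Longrightarrow> mf P l g = mf P l h"
  unfolding mf_def by simp

lemma mf_mult:
  assumes "P ** transpose P = mat 1"
  shows "mf P l g ** mf P l h = mf P l (\<lambda>x. g x * h x)"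
proof -
  have "mf P l g ** mf P l h = transpose P ** dmat (\<lambda>i. g (l i)) ** (P ** transpose P) ** dmat (\<lambda>i. h (l i)) ** P"
    unfolding mf_def by (simp only: matrix_mul_assoc)
  also have "\<dots> = transpose P ** (dmat (\<lambda>i. g (l i)) ** dmat (\<lambda>i. h (l i))) ** P"
    unfolding assms matrix_mul_rid by (simp only: matrix_mul_assoc)
  finally show ?thesis unfolding mf_def dmat_mult .
qed

lemma mf_one:
  assumes "transpose P ** P = mat 1"
  shows "mf P l (\<lambda>_. 1) = mat 1"
  unfolding mf_def dmat_one using assms by simp

lemma mf_transpose: "transpose (mf P l g) = mf P l g"
  unfolding mf_def by (simp only: matrix_transpose_mul transpose_transpose dmat_transpose matrix_mul_assoc)

lemma mf_coord:
  assumes "P ** transpose P = mat 1"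
  shows "(P *v (mf P l g *v x)) $ i = g (l i) * (P *v x) $ i"
proof -
  have "P *v (mf P l g *v x) = (P ** transpose P) *v (dmat (\<lambda>i. g (l i)) *v (P *v x))"
    unfolding mf_def by (simp only: matrix_vector_mul_assoc matrix_mul_assoc)
  thus ?thesis unfolding assms matrix_vector_mul_lid by (simp add: dmat_mv)
qed

lemma inner_vmul: "x \<bullet> (y v* P) = (P *v x) \<bullet> (y::real^'n)"
  by (metis dot_lmul_matrix inner_commute)

lemma inner_transpose: "x \<bullet> (transpose P *v y) = (P *v x) \<bullet> (y::real^'n)"
  by (simp add: inner_vmul)

lemma mf_quad:
  "x \<bullet> (mf P l g *v x) = (\<Sum>i\<in>UNIV. g (l i) * ((P *v x) $ i)^2)"
proof -
  have "x \<bullet> (mf P l g *v x) = (P *v x) \<bullet> (dmat (\<lambda>i. g (l i)) *v (P *v x))"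
    unfolding mf_def by (simp add: matrix_vector_mul_assoc[symmetric] inner_vmul)
  thus ?thesis by (simp add: inner_vec_def dmat_mv power2_eq_square mult.assoc mult.left_commute)
qed

lemma norm_orth:
  assumes "transpose P ** P = mat 1"
  shows "(norm (x::real^'n))^2 = (\<Sum>i\<in>UNIV. ((P *v x) $ i)^2)"
proof -
  have "(norm x)^2 = x \<bullet> (transpose P *v (P *v x))"
    using assms by (simp add: matrix_vector_mul_assoc power2_norm_eq_inner)
  also have "\<dots> = (P *v x) \<bullet> (P *v x)" by (simp only: inner_transpose)
  finally show ?thesis by (simp add: inner_vec_def power2_eq_square)
qed

lemma mf_eigen:
  assumes "P ** transpose P = mat 1"
  shows "mf P l g *v (P $ i) = g (l i) *\<^sub>R (P $ i)"
proof -
  have e: "P *v (P $ i) = axis i 1"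
  proof -
    have "(P *v (P $ i)) $ j = (P ** transpose P) $ j $ i" for j
      by (simp add: matrix_vector_mult_def matrix_matrix_mult_def transpose_def mult.commute)
    thus ?thesis using assms by (simp add: vec_eq_iff mat_def axis_def)
  qed
  have "dmat (\<lambda>i. g (l i)) *v axis i 1 = g (l i) *\<^sub>R axis i 1"
    by (simp add: vec_eq_iff dmat_mv axis_def)
  moreover have "transpose P *v axis i 1 = P $ i"
  proof -
    have "(\<Sum>k\<in>UNIV. P $ k $ j * (if k = i then 1 else 0)) = P $ i $ j" for j
      by (subst sum.remove[of _ i]) auto
    thus ?thesis by (simp add: vec_eq_iff matrix_vector_mult_def transpose_def axis_def)
  qed
  ultimately show ?thesis unfolding mf_def
    by (simp add: matrix_vector_mul_assoc[symmetric] e matrix_vector_mult_scaleR)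
qed

lemma row_norm:
  fixes P :: "real^'n^'n"
  assumes "P ** transpose P = mat 1"
  shows "(P $ i) \<bullet> (P $ i) = (1::real)"
proof -
  have "(P ** transpose P) $ i $ i = (P $ i) \<bullet> (P $ i)"
    by (simp add: matrix_matrix_mult_def transpose_def inner_vec_def)
  thus ?thesis using assms by (simp add: mat_def)
qed

lemma psd_zero:
  fixes S :: "real^'n^'n"
  assumes "sym_psd S" and "x \<bullet> (S *v x) = 0"
  shows "S *v x = 0"
proof -
  have sym: "transpose S = S" and psd: "\<And>y. y \<bullet> (S *v y) \<ge> 0" using assms(1) by (auto simp: sym_psd_def)
  have "- ((S *v x) \<bullet> (S *v x)) = 0"
  proof (rule quad_zero[where b = "- ((S *v x) \<bullet> (S *v (S *v x)))"])
    fix t :: real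
    let ?y = "S *v x"
    have "(x + t *\<^sub>R ?y) \<bullet> (S *v (x + t *\<^sub>R ?y)) \<ge> 0" by (rule psd)
    moreover have "(x + t *\<^sub>R ?y) \<bullet> (S *v (x + t *\<^sub>R ?y)) = 2*t*(?y \<bullet> ?y) + t^2 * (?y \<bullet> (S *v ?y))"
      using assms(2) inner_sym_mat[OF sym, of x ?y]
      by (simp add: matrix_vector_right_distrib matrix_vector_mult_scaleR inner_add_left inner_add_right power2_eq_square algebra_simps)
    ultimately show "2 * t * (- (?y \<bullet> ?y)) + t\<^sup>2 * (- (?y \<bullet> (S *v ?y))) \<le> 0" by simp
  qed
  thus ?thesis by simp
qed

lemma psd_sqrt_unique:
  fixes S T :: "real^'n^'n"
  assumes S: "sym_psd S" and T: "sym_psd T" and eq: "S ** S = T ** T"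
  shows "S = T"
proof -
  define D where "D = S - T"
  have symS: "transpose S = S" and symT: "transpose T = T" using S T by (auto simp: sym_psd_def)
  have sS: "S $ i $ j = S $ j $ i" for i j using symS unfolding transpose_def by (metis vec_lambda_beta)
  have sT: "T $ i $ j = T $ j $ i" for i j using symT unfolding transpose_def by (metis vec_lambda_beta)
  have "transpose D $ i $ j = D $ i $ j" for i j
    unfolding D_def transpose_def by (simp add: sS[of j i] sT[of j i])
  hence symD: "transpose D = D" by (simp add: vec_eq_iff)
  then obtain Q :: "real^'n^'n" and m where Q: "Q ** transpose Q = mat 1" "transpose Q ** Q = mat 1"
    and Dd: "D = transpose Q ** dmat m ** Q"
    using spectral by blast
  have mz: "m i = 0" for i
  proof (rule ccontr)
    assume mi: "m i \<noteq> 0"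
    let ?v = "Q $ i"
    have Dv: "D *v ?v = m i *\<^sub>R ?v" using mf_eigen[OF Q(1), where g="\<lambda>x. x" and l=m and i=i] Dd by (simp add: mf_def)
    have Dw: "D *v w = S *v w - T *v w" for w unfolding D_def by (simp add: matrix_vector_mult_diff_rdistrib)
    have "S *v (D *v ?v) + D *v (T *v ?v) = (S ** S) *v ?v - (T ** T) *v ?v"
      unfolding Dw by (simp add: matrix_vector_mult_diff_distrib matrix_vector_mul_assoc)
    hence z: "S *v (D *v ?v) + D *v (T *v ?v) = 0" using eq by simp
    have "?v \<bullet> (D *v (T *v ?v)) = (D *v ?v) \<bullet> (T *v ?v)"
      by (rule inner_sym_mat[OF symD])
    also have "\<dots> = m i * (?v \<bullet> (T *v ?v))" using Dv by simp
    finally have "?v \<bullet> (S *v (D *v ?v) + D *v (T *v ?v)) = m i * (?v \<bullet> (S *v ?v)) + m i * (?v \<bullet> (T *v ?v))"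
      using Dv by (simp add: inner_add_right matrix_vector_mult_scaleR)
    hence "m i * (?v \<bullet> (S *v ?v)) + m i * (?v \<bullet> (T *v ?v)) = 0" unfolding z by simp
    hence "m i * (?v \<bullet> (S *v ?v) + ?v \<bullet> (T *v ?v)) = 0" by (simp add: algebra_simps)
    hence "?v \<bullet> (S *v ?v) + ?v \<bullet> (T *v ?v) = 0" using mi by simp
    moreover have "?v \<bullet> (S *v ?v) \<ge> 0" "?v \<bullet> (T *v ?v) \<ge> 0" using S T by (auto simp: sym_psd_def)
    ultimately have "?v \<bullet> (S *v ?v) = 0" "?v \<bullet> (T *v ?v) = 0" by linarith+
    hence "S *v ?v = 0" "T *v ?v = 0" using psd_zero S T by blast+
    hence "D *v ?v = 0" unfolding Dw by simp
    hence "m i *\<^sub>R ?v = 0" using Dv by simp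
    hence "?v = 0" using mi by simp
    thus False using row_norm[OF Q(1), of i] by simp
  qed
  have "m = (\<lambda>_. 0)" using mz by auto
  hence "D = transpose Q ** mat 0 ** Q" using Dd by (simp add: dmat_def mat_def)
  hence "D = 0" by (simp add: vec_eq_iff matrix_matrix_mult_def mat_def)
  thus ?thesis unfolding D_def by simp
qed

lemma inv_unique:
  fixes A B :: "real^'n^'n"
  assumes "A ** B = mat 1" "B ** A = mat 1"
  shows "matrix_inv A = B"
  unfolding matrix_inv_def
proof (rule someI2[of _ B])
  show "A ** B = mat 1 \<and> B ** A = mat 1" using assms by simp
next
  fix A' assume "A ** A' = mat 1 \<and> A' ** A = mat 1"
  hence "A' = (B ** A) ** A'" using assms by simp
  also have "\<dots> = B ** (A ** A')" by (simp only: matrix_mul_assoc)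
  also have "\<dots> = B" using \<open>A ** A' = mat 1 \<and> A' ** A = mat 1\<close> by simp
  finally show "A' = B" .
qed

lemma spectral_setup:
  fixes H :: "real^'n^'n"
  assumes H: "sym_pos_def H" and g: "\<gamma> > 0" "\<gamma> * trace H \<le> 1"
  shows "\<exists>P l. P ** transpose P = mat 1 \<and> transpose P ** P = mat 1 \<and> H = mf P l (\<lambda>x. x) \<and>
     (\<forall>i. 0 < l i \<and> \<gamma> * l i \<le> 1) \<and> msqrt H = mf P l sqrt \<and>
     matrix_inv (msqrt H) = mf P l (\<lambda>x. 1 / sqrt x) \<and> matrix_inv H = mf P l (\<lambda>x. 1 / x) \<and>
     trace H = sum l UNIV"
proof -
  have symH: "transpose H = H" using H by (simp add: sym_pos_def_def)
  obtain P :: "real^'n^'n" and l where P1: "P ** transpose P = mat 1" and P2: "transpose P ** P = mat 1"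
    and Hd: "H = transpose P ** dmat l ** P"
    using spectral[OF symH] by blast
  have Hm: "H = mf P l (\<lambda>x. x)" unfolding mf_def Hd by simp
  have lpos: "0 < l i" for i
  proof -
    have "H *v (P $ i) = l i *\<^sub>R (P $ i)" using mf_eigen[OF P1, where g="\<lambda>x. x" and l=l and i=i] Hm by simp
    hence "(P $ i) \<bullet> (H *v (P $ i)) = l i" using row_norm[OF P1, of i] by simp
    moreover have "P $ i \<noteq> 0" using row_norm[OF P1, of i] by auto
    ultimately show ?thesis using H by (auto simp: sym_pos_def_def)
  qed
  have lne: "l i \<noteq> 0" for i using lpos[of i] by simp
  have tr: "trace H = sum l UNIV"
  proof -
    have "trace H = trace (transpose P ** (dmat l ** P))"
      unfolding Hd by (simp only: matrix_mul_assoc)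
    also have "\<dots> = trace ((dmat l ** P) ** transpose P)" by (rule trace_mul_sym)
    also have "\<dots> = trace (dmat l)" by (simp only: matrix_mul_assoc[symmetric] P1 matrix_mul_rid)
    also have "\<dots> = sum l UNIV" by (simp add: trace_def dmat_def)
    finally show ?thesis .
  qed
  have lle: "\<gamma> * l i \<le> 1" for i
  proof -
    have "l i \<le> sum l UNIV" by (rule member_le_sum) (auto intro: less_imp_le lpos)
    hence "\<gamma> * l i \<le> \<gamma> * trace H" using g tr by (simp add: mult_left_mono)
    thus ?thesis using g by linarith
  qed
  have sq: "msqrt H = mf P l sqrt"
    unfolding msqrt_def
  proof (rule the_equality)
    show "sym_psd (mf P l sqrt) \<and> mf P l sqrt ** mf P l sqrt = H"
    proof
      show "sym_psd (mf P l sqrt)" unfolding sym_psd_def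
        using lpos by (auto simp: mf_transpose mf_quad less_imp_le intro!: sum_nonneg mult_nonneg_nonneg)
      have "mf P l sqrt ** mf P l sqrt = mf P l (\<lambda>x. sqrt x * sqrt x)" by (rule mf_mult[OF P1])
      also have "\<dots> = mf P l (\<lambda>x. x)" by (rule mf_cong) (simp add: less_imp_le[OF lpos])
      finally show "mf P l sqrt ** mf P l sqrt = H" using Hm by simp
    qed
  next
    fix S assume S: "sym_psd S \<and> S ** S = H"
    have "sym_psd (mf P l sqrt)" unfolding sym_psd_def
      using lpos by (auto simp: mf_transpose mf_quad less_imp_le intro!: sum_nonneg mult_nonneg_nonneg)
    moreover have "mf P l sqrt ** mf P l sqrt = mf P l (\<lambda>x. x)"
      unfolding mf_mult[OF P1] by (rule mf_cong) (simp add: less_imp_le[OF lpos])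
    ultimately show "S = mf P l sqrt" using psd_sqrt_unique[of S "mf P l sqrt"] S Hm by auto
  qed
  have isq: "matrix_inv (msqrt H) = mf P l (\<lambda>x. 1 / sqrt x)"
  proof (rule inv_unique)
    have "mf P l sqrt ** mf P l (\<lambda>x. 1 / sqrt x) = mf P l (\<lambda>_. 1)"
      unfolding mf_mult[OF P1] by (rule mf_cong) (simp add: lne less_imp_le[OF lpos])
    thus "msqrt H ** mf P l (\<lambda>x. 1 / sqrt x) = mat 1" using sq mf_one[OF P2] by simp
    have "mf P l (\<lambda>x. 1 / sqrt x) ** mf P l sqrt = mf P l (\<lambda>_. 1)"
      unfolding mf_mult[OF P1] by (rule mf_cong) (simp add: lne less_imp_le[OF lpos])
    thus "mf P l (\<lambda>x. 1 / sqrt x) ** msqrt H = mat 1" using sq mf_one[OF P2] by simp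
  qed
  have iH: "matrix_inv H = mf P l (\<lambda>x. 1 / x)"
  proof (rule inv_unique)
    have "mf P l (\<lambda>x. x) ** mf P l (\<lambda>x. 1 / x) = mf P l (\<lambda>_. 1)"
      unfolding mf_mult[OF P1] by (rule mf_cong) (simp add: lne less_imp_le[OF lpos])
    thus "H ** mf P l (\<lambda>x. 1 / x) = mat 1" using Hm mf_one[OF P2] by simp
    have "mf P l (\<lambda>x. 1 / x) ** mf P l (\<lambda>x. x) = mf P l (\<lambda>_. 1)"
      unfolding mf_mult[OF P1] by (rule mf_cong) (simp add: lne less_imp_le[OF lpos])
    thus "mf P l (\<lambda>x. 1 / x) ** H = mat 1" using Hm mf_one[OF P2] by simp
  qed
  show ?thesis using P1 P2 Hm lpos lle sq isq iH tr by blast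
qed

lemma eta_coord:
  fixes P :: "real^'n^'n"
  assumes P1: "P ** transpose P = mat 1" and Hm: "H = mf P l (\<lambda>x. x)"
  shows "(P *v eta0_seq \<gamma> H xa e0 k \<omega>) $ i =
     (1 - \<gamma> * l i)^k * (P *v e0) $ i + \<gamma> * (\<Sum>j\<in>{1..k}. (1 - \<gamma> * l i)^(k - j) * (P *v xa j \<omega>) $ i)"
proof (induction k)
  case 0
  then show ?case by simp
next
  case (Suc k)
  let ?r = "1 - \<gamma> * l i"
  let ?v = "eta0_seq \<gamma> H xa e0 k \<omega>"
  have "(P *v eta0_seq \<gamma> H xa e0 (Suc k) \<omega>) $ i = (P *v ?v) $ i - \<gamma> * (P *v (H *v ?v)) $ i + \<gamma> * (P *v xa (Suc k) \<omega>) $ i"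
  proof -
    have a: "(mat 1 - \<gamma> *\<^sub>R H) *v ?v = ?v - \<gamma> *\<^sub>R (H *v ?v)"
      by (simp only: matrix_vector_mult_diff_rdistrib matrix_vector_mul_lid scaleR_matrix_vector_assoc)
    have "P *v eta0_seq \<gamma> H xa e0 (Suc k) \<omega> = P *v ?v - \<gamma> *\<^sub>R (P *v (H *v ?v)) + \<gamma> *\<^sub>R (P *v xa (Suc k) \<omega>)"
      by (simp only: eta0_seq.simps a matrix_vector_right_distrib matrix_vector_mult_diff_distrib matrix_vector_mult_scaleR)
    thus ?thesis by simp
  qed
  also have "(P *v (H *v ?v)) $ i = l i * (P *v ?v) $ i" unfolding Hm by (rule mf_coord[OF P1])
  finally have e: "(P *v eta0_seq \<gamma> H xa e0 (Suc k) \<omega>) $ i = ?r * (P *v ?v) $ i + \<gamma> * (P *v xa (Suc k) \<omega>) $ i"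
    by (simp add: algebra_simps)
  have s: "(\<Sum>j\<in>{1..Suc k}. ?r^(Suc k - j) * (P *v xa j \<omega>) $ i)
      = ?r * (\<Sum>j\<in>{1..k}. ?r^(k - j) * (P *v xa j \<omega>) $ i) + (P *v xa (Suc k) \<omega>) $ i"
  proof -
    have "(\<Sum>j\<in>{1..Suc k}. ?r^(Suc k - j) * (P *v xa j \<omega>) $ i)
        = (\<Sum>j\<in>{1..k}. ?r^(Suc k - j) * (P *v xa j \<omega>) $ i) + (P *v xa (Suc k) \<omega>) $ i"
    proof -
      have "{1..Suc k} = insert (Suc k) {1..k}" by auto
      thus ?thesis by simp
    qed
    also have "(\<Sum>j\<in>{1..k}. ?r^(Suc k - j) * (P *v xa j \<omega>) $ i) = ?r * (\<Sum>j\<in>{1..k}. ?r^(k - j) * (P *v xa j \<omega>) $ i)"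
      unfolding sum_distrib_left
      by (rule sum.cong) (auto simp: Suc_diff_le mult.assoc)
    finally show ?thesis .
  qed
  show ?case unfolding e Suc s by (simp add: algebra_simps)
qed

lemma geo_bounds:
  fixes x :: real
  assumes "0 < x" "x \<le> 1"
  shows "(\<Sum>k<n. (1 - x)^k) \<le> 1 / x" "(\<Sum>k<n. (1 - x)^k) \<le> real n" "0 \<le> (\<Sum>k<n. (1 - x)^k)"
proof -
  have "(\<Sum>k<n. (1 - x)^k) = (1 - (1 - x)^n) / x"
    using assms sum_gp_strict[of "1 - x" n] by simp
  moreover have "0 \<le> (1 - x)^n" using assms by simp
  ultimately show "(\<Sum>k<n. (1 - x)^k) \<le> 1 / x" using assms by (simp add: divide_right_mono)
  have "(\<Sum>k<n. (1 - x)^k) \<le> (\<Sum>k<n. 1)"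
    by (rule sum_mono) (use assms in \<open>simp add: power_le_one\<close>)
  thus "(\<Sum>k<n. (1 - x)^k) \<le> real n" by simp
  show "0 \<le> (\<Sum>k<n. (1 - x)^k)" using assms by (simp add: sum_nonneg)
qed

lemma D_bound:
  fixes l \<gamma> s c :: real and K :: nat
  assumes l: "0 < l" and g: "0 < \<gamma>" and K: "K \<ge> 1"
    and s0: "0 \<le> s" and s1: "s \<le> 1 / (\<gamma> * l)" and s2: "s \<le> real K"
  shows "(sqrt l / K * s * c)^2 \<le> c^2 / (\<gamma>^2 * K^2 * l)"
    and "(sqrt l / K * s * c)^2 \<le> c^2 / (\<gamma> * K)"
proof -
  have Kp: "real K > 0" using K by simp
  have e: "(sqrt l / K * s * c)^2 = l * s^2 * c^2 / K^2"
    using l by (simp add: power_mult_distrib power_divide)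
  have "s^2 \<le> (1 / (\<gamma> * l))^2" by (rule power_mono[OF s1 s0])
  hence "l * s^2 \<le> l * (1 / (\<gamma> * l))^2" using l by simp
  also have "\<dots> = 1 / (\<gamma>^2 * l)" using l g by (simp add: power2_eq_square field_simps)
  finally have "l * s^2 * (c^2 / K^2) \<le> 1 / (\<gamma>^2 * l) * (c^2 / K^2)"
    by (rule mult_right_mono) simp
  thus "(sqrt l / K * s * c)^2 \<le> c^2 / (\<gamma>^2 * K^2 * l)"
    unfolding e using l g Kp by (simp add: field_simps)
  have "s^2 \<le> real K * (1 / (\<gamma> * l))" unfolding power2_eq_square
    using s0 s1 s2 by (intro mult_mono) auto
  hence "l * s^2 \<le> l * (real K * (1 / (\<gamma> * l)))" using l by (intro mult_left_mono) auto
  also have "\<dots> = real K / \<gamma>" using l g by (simp add: field_simps)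
  finally have "l * s^2 * (c^2 / K^2) \<le> real K / \<gamma> * (c^2 / K^2)"
    by (rule mult_right_mono) simp
  thus "(sqrt l / K * s * c)^2 \<le> c^2 / (\<gamma> * K)"
    unfolding e using l g Kp by (simp add: field_simps power2_eq_square)
qed

lemma a_bound:
  fixes l \<gamma> t :: real and K :: nat
  assumes l: "0 < l" and g: "0 < \<gamma>" and K: "K \<ge> 1"
    and t0: "0 \<le> t" and t1: "t \<le> 1 / (\<gamma> * l)"
  shows "(sqrt l * \<gamma> / K * t)^2 \<le> 1 / (l * K^2)"
proof -
  have Kp: "real K > 0" using K by simp
  have e: "(sqrt l * \<gamma> / K * t)^2 = l * \<gamma>^2 * t^2 / K^2"
    using l by (simp add: power_mult_distrib power_divide)
  have "t^2 \<le> (1 / (\<gamma> * l))^2" by (rule power_mono[OF t1 t0])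
  hence "l * \<gamma>^2 * t^2 \<le> l * \<gamma>^2 * (1 / (\<gamma> * l))^2" using l g by simp
  also have "\<dots> = 1 / l" using l g by (simp add: power2_eq_square field_simps)
  finally have "l * \<gamma>^2 * t^2 / K^2 \<le> (1 / l) / K^2" by (rule divide_right_mono) simp
  also have "(1 / l) / K^2 = 1 / (l * K^2)" by simp
  finally show ?thesis unfolding e .
qed

lemma (in prob_space) sq_sum_indep:
  fixes Y :: "nat \<Rightarrow> 'a \<Rightarrow> real" and J :: "nat set" and D :: real and a :: "nat \<Rightarrow> real"
  assumes fin: "finite J" and ind: "indep_vars (\<lambda>_. borel) Y J"
    and int2: "\<And>j. j \<in> J \<Longrightarrow> integrable M (\<lambda>\<omega>. (Y j \<omega>)^2)"
    and int1: "\<And>j. j \<in> J \<Longrightarrow> integrable M (Y j)"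
    and cen: "\<And>j. j \<in> J \<Longrightarrow> expectation (Y j) = 0"
  shows "integrable M (\<lambda>\<omega>. (D + (\<Sum>j\<in>J. a j * Y j \<omega>))^2) \<and>
    expectation (\<lambda>\<omega>. (D + (\<Sum>j\<in>J. a j * Y j \<omega>))^2) = D^2 + (\<Sum>j\<in>J. (a j)^2 * expectation (\<lambda>\<omega>. (Y j \<omega>)^2))"
proof -
  have pint: "integrable M (\<lambda>\<omega>. Y j \<omega> * Y k \<omega>) \<and>
      expectation (\<lambda>\<omega>. Y j \<omega> * Y k \<omega>) = (if j = k then expectation (\<lambda>\<omega>. (Y j \<omega>)^2) else 0)"
    if j: "j \<in> J" and k: "k \<in> J" for j k
  proof (cases "j = k")
    case True
    thus ?thesis using int2[OF j] by (simp add: power2_eq_square)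
  next
    case False
    have i2: "indep_vars (\<lambda>_. borel) Y {j, k}" by (rule indep_vars_subset[OF ind]) (use j k in auto)
    have ii: "\<And>i. i \<in> {j, k} \<Longrightarrow> integrable M (Y i)" using int1 j k by auto
    have "integrable M (\<lambda>\<omega>. \<Prod>i\<in>{j, k}. Y i \<omega>)" by (rule indep_vars_integrable[OF _ i2 ii]) simp
    moreover have "expectation (\<lambda>\<omega>. \<Prod>i\<in>{j, k}. Y i \<omega>) = (\<Prod>i\<in>{j, k}. expectation (Y i))"
      by (rule indep_vars_lebesgue_integral[OF _ i2 ii]) simp
    ultimately show ?thesis using False cen[OF j] by simp
  qed
  have pI: "integrable M (\<lambda>\<omega>. Y j \<omega> * Y k \<omega>)" if "j \<in> J" "k \<in> J" for j k
    using pint[OF that] by blast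
  have expand: "(D + (\<Sum>j\<in>J. a j * Y j \<omega>))^2 =
      D^2 + (\<Sum>j\<in>J. (2 * D * a j) * Y j \<omega>) + (\<Sum>j\<in>J. \<Sum>k\<in>J. (a j * a k) * (Y j \<omega> * Y k \<omega>))" for \<omega>
  proof -
    have "(D + (\<Sum>j\<in>J. a j * Y j \<omega>))^2 = D^2 + 2 * D * (\<Sum>j\<in>J. a j * Y j \<omega>) + (\<Sum>j\<in>J. a j * Y j \<omega>) * (\<Sum>k\<in>J. a k * Y k \<omega>)"
      by (simp add: power2_eq_square algebra_simps)
    also have "(\<Sum>j\<in>J. a j * Y j \<omega>) * (\<Sum>k\<in>J. a k * Y k \<omega>) = (\<Sum>j\<in>J. \<Sum>k\<in>J. (a j * a k) * (Y j \<omega> * Y k \<omega>))"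
      by (simp add: sum_product mult_ac)
    also have "2 * D * (\<Sum>j\<in>J. a j * Y j \<omega>) = (\<Sum>j\<in>J. (2 * D * a j) * Y j \<omega>)"
      by (simp add: sum_distrib_left mult_ac)
    finally show ?thesis .
  qed
  have i_lin: "integrable M (\<lambda>\<omega>. \<Sum>j\<in>J. (2 * D * a j) * Y j \<omega>)"
    by (rule Bochner_Integration.integrable_sum) (simp add: int1)
  have i_quad: "integrable M (\<lambda>\<omega>. \<Sum>j\<in>J. \<Sum>k\<in>J. (a j * a k) * (Y j \<omega> * Y k \<omega>))"
    by (rule Bochner_Integration.integrable_sum, rule Bochner_Integration.integrable_sum) (simp add: pI)
  have e_lin: "expectation (\<lambda>\<omega>. \<Sum>j\<in>J. (2 * D * a j) * Y j \<omega>) = 0"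
  proof -
    have "expectation (\<lambda>\<omega>. \<Sum>j\<in>J. (2 * D * a j) * Y j \<omega>) = (\<Sum>j\<in>J. expectation (\<lambda>\<omega>. (2 * D * a j) * Y j \<omega>))"
      by (rule Bochner_Integration.integral_sum) (simp add: int1)
    also have "\<dots> = 0" using cen by simp
    finally show ?thesis .
  qed
  have e_quad: "expectation (\<lambda>\<omega>. \<Sum>j\<in>J. \<Sum>k\<in>J. (a j * a k) * (Y j \<omega> * Y k \<omega>))
      = (\<Sum>j\<in>J. (a j)^2 * expectation (\<lambda>\<omega>. (Y j \<omega>)^2))"
  proof -
    have "expectation (\<lambda>\<omega>. \<Sum>j\<in>J. \<Sum>k\<in>J. (a j * a k) * (Y j \<omega> * Y k \<omega>))
        = (\<Sum>j\<in>J. \<Sum>k\<in>J. (a j * a k) * expectation (\<lambda>\<omega>. Y j \<omega> * Y k \<omega>))"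
    proof -
      have ii: "integrable M (\<lambda>\<omega>. \<Sum>k\<in>J. (a j * a k) * (Y j \<omega> * Y k \<omega>))" if "j \<in> J" for j
        by (rule Bochner_Integration.integrable_sum) (simp add: pI that)
      have "expectation (\<lambda>\<omega>. \<Sum>j\<in>J. \<Sum>k\<in>J. (a j * a k) * (Y j \<omega> * Y k \<omega>))
          = (\<Sum>j\<in>J. expectation (\<lambda>\<omega>. \<Sum>k\<in>J. (a j * a k) * (Y j \<omega> * Y k \<omega>)))"
        by (rule Bochner_Integration.integral_sum) (rule ii)
      also have "\<dots> = (\<Sum>j\<in>J. \<Sum>k\<in>J. expectation (\<lambda>\<omega>. (a j * a k) * (Y j \<omega> * Y k \<omega>)))"
        by (rule sum.cong[OF refl], rule Bochner_Integration.integral_sum) (simp add: pI)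
      finally show ?thesis by simp
    qed
    also have "\<dots> = (\<Sum>j\<in>J. \<Sum>k\<in>J. if k = j then (a j)^2 * expectation (\<lambda>\<omega>. (Y j \<omega>)^2) else 0)"
    proof (rule sum.cong[OF refl], rule sum.cong[OF refl])
      fix j k assume j: "j \<in> J" and k: "k \<in> J"
      show "a j * a k * expectation (\<lambda>\<omega>. Y j \<omega> * Y k \<omega>) = (if k = j then (a j)^2 * expectation (\<lambda>\<omega>. (Y j \<omega>)^2) else 0)"
      proof (cases "k = j")
        case True thus ?thesis by (simp add: power2_eq_square)
      next
        case False thus ?thesis using pint[OF j k] by simp
      qed
    qed
    also have "\<dots> = (\<Sum>j\<in>J. (a j)^2 * expectation (\<lambda>\<omega>. (Y j \<omega>)^2))"
      using fin by simp
    finally show ?thesis .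
  qed
  show ?thesis
  proof
    show "integrable M (\<lambda>\<omega>. (D + (\<Sum>j\<in>J. a j * Y j \<omega>))^2)"
      unfolding expand using i_lin i_quad by (intro Bochner_Integration.integrable_add integrable_const) auto
    show "expectation (\<lambda>\<omega>. (D + (\<Sum>j\<in>J. a j * Y j \<omega>))^2) = D^2 + (\<Sum>j\<in>J. (a j)^2 * expectation (\<lambda>\<omega>. (Y j \<omega>)^2))"
      unfolding expand using i_lin i_quad e_lin e_quad by (simp add: Bochner_Integration.integral_add prob_space)
  qed
qed

lemma sum_swap_tri:
  fixes K :: nat
  shows "(\<Sum>k<K. \<Sum>j\<in>{1..k}. f k j) = (\<Sum>j\<in>{1..<K}. \<Sum>k\<in>{j..<K}. (f k j :: real))"
proof -
  have "(\<Sum>k<K. \<Sum>j\<in>{1..k}. f k j) = (\<Sum>k\<in>{..<K}. \<Sum>j\<in>{j\<in>{1..<K}. j \<le> k}. f k j)"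
  proof (rule sum.cong[OF refl])
    fix k assume "k \<in> {..<K}"
    hence "{j\<in>{1..<K}. j \<le> k} = {1..k}" by (auto dest: le_less_trans)
    thus "(\<Sum>j\<in>{1..k}. f k j) = (\<Sum>j\<in>{j\<in>{1..<K}. j \<le> k}. f k j)" by simp
  qed
  also have "\<dots> = (\<Sum>j\<in>{1..<K}. \<Sum>k | k \<in> {..<K} \<and> j \<le> k. f k j)"
    by (rule sum.swap_restrict) auto
  also have "\<dots> = (\<Sum>j\<in>{1..<K}. \<Sum>k\<in>{j..<K}. f k j)"
  proof (rule sum.cong[OF refl])
    fix j assume "j \<in> {1..<K}"
    have "{k. k \<in> {..<K} \<and> j \<le> k} = {j..<K}" by auto
    thus "(\<Sum>k | k \<in> {..<K} \<and> j \<le> k. f k j) = (\<Sum>k\<in>{j..<K}. f k j)" by simp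
  qed
  finally show ?thesis .
qed

lemma sum_shift_pow: "(\<Sum>k\<in>{j..<K}. (r::real)^(k - j)) = (\<Sum>m<K - j. r^m)"
  by (subst sum.atLeastLessThan_shift_0) (simp add: atLeast0LessThan)

lemma trace_dmat: "trace (A ** dmat d) = (\<Sum>i\<in>UNIV. A $ i $ i * d i)"
proof -
  have "(\<Sum>k\<in>UNIV. A $ i $ k * (if k = i then d k else 0)) = A $ i $ i * d i" for i
    by (subst sum.remove[of _ i]) auto
  thus ?thesis by (simp add: trace_def matrix_matrix_mult_def dmat_def)
qed

lemma meas_row:
  fixes p :: "real^'n"
  shows "(\<lambda>f. p \<bullet> f (0::real^'n)) \<in> borel_measurable (Pi\<^sub>M UNIV (\<lambda>_::real^'n. (borel :: (real^'n) measure)))"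
  by measurable

lemma meas_sq:
  shows "(\<lambda>f. (norm (f (0::real^'n)))^2) \<in> borel_measurable (Pi\<^sub>M UNIV (\<lambda>_::real^'n. (borel :: (real^'n) measure)))"
  by measurable

lemma meas_comp:
  fixes i j :: "'n::finite"
  shows "(\<lambda>f. (f (0::real^'n)) $ i * (f 0) $ j) \<in> borel_measurable (Pi\<^sub>M UNIV (\<lambda>_::real^'n. (borel :: (real^'n) measure)))"
proof -
  have "(\<lambda>f. (f (0::real^'n)) $ i * (f 0) $ j) = (\<lambda>f. (axis i 1 \<bullet> f 0) * (axis j 1 \<bullet> f 0))"
    by (simp add: cart_eq_inner_axis inner_commute)
  thus ?thesis using meas_row[of "axis i 1"] meas_row[of "axis j 1"] by simp
qed

lemma coordZ:
  fixes P :: "real^'n^'n"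
  assumes P1: "P ** transpose P = mat 1" and Hm: "H = mf P l (\<lambda>x. x)" and sq: "msqrt H = mf P l sqrt"
  shows "(P *v (msqrt H *v eta0_bar \<gamma> H xa e0 K \<omega>)) $ i =
     sqrt (l i) / K * (\<Sum>k<K. (1 - \<gamma> * l i)^k) * (P *v e0) $ i +
     (\<Sum>j\<in>{1..<K}. (sqrt (l i) * \<gamma> / K * (\<Sum>m<K - j. (1 - \<gamma> * l i)^m)) * (P *v xa j \<omega>) $ i)"
proof -
  let ?r = "1 - \<gamma> * l i"
  let ?c = "(P *v e0) $ i"
  let ?y = "\<lambda>j. (P *v xa j \<omega>) $ i"
  have a: "(P *v (msqrt H *v eta0_bar \<gamma> H xa e0 K \<omega>)) $ i = sqrt (l i) * (P *v eta0_bar \<gamma> H xa e0 K \<omega>) $ i"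
    unfolding sq by (rule mf_coord[OF P1])
  have b: "(P *v eta0_bar \<gamma> H xa e0 K \<omega>) $ i = (1 / K) * (\<Sum>k<K. (P *v eta0_seq \<gamma> H xa e0 k \<omega>) $ i)"
    unfolding eta0_bar_def by (simp add: matrix_vector_mult_scaleR vec.sum sum_component)
  have "(\<Sum>k<K. (P *v eta0_seq \<gamma> H xa e0 k \<omega>) $ i) = (\<Sum>k<K. ?r^k * ?c + \<gamma> * (\<Sum>j\<in>{1..k}. ?r^(k - j) * ?y j))"
    by (rule sum.cong[OF refl]) (rule eta_coord[OF P1 Hm])
  also have "\<dots> = (\<Sum>k<K. ?r^k) * ?c + \<gamma> * (\<Sum>k<K. \<Sum>j\<in>{1..k}. ?r^(k - j) * ?y j)"
    by (simp add: sum.distrib sum_distrib_left sum_distrib_right)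
  also have "(\<Sum>k<K. \<Sum>j\<in>{1..k}. ?r^(k - j) * ?y j) = (\<Sum>j\<in>{1..<K}. \<Sum>k\<in>{j..<K}. ?r^(k - j) * ?y j)"
    by (rule sum_swap_tri)
  also have "\<dots> = (\<Sum>j\<in>{1..<K}. (\<Sum>m<K - j. ?r^m) * ?y j)"
    by (rule sum.cong[OF refl]) (simp add: sum_distrib_right[symmetric] sum_shift_pow)
  finally have c: "(\<Sum>k<K. (P *v eta0_seq \<gamma> H xa e0 k \<omega>) $ i) = (\<Sum>k<K. ?r^k) * ?c + \<gamma> * (\<Sum>j\<in>{1..<K}. (\<Sum>m<K - j. ?r^m) * ?y j)" .
  show ?thesis unfolding a b c
    by (simp add: sum_distrib_left algebra_simps)
qed

lemma final_ineq:
  fixes sD N T u v \<gamma> :: real and K :: nat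
  assumes K: "K \<ge> 1" and g: "\<gamma> > 0" and sD0: "0 \<le> sD" and N0: "0 \<le> N" and T0: "0 \<le> T"
    and u0: "0 \<le> u" and v0: "0 \<le> v"
    and d1: "sD \<le> u^2 / (\<gamma>^2 * K^2)" and d2: "sD \<le> v^2 / (\<gamma> * K)" and n: "N \<le> T / K"
  shows "sqrt (sD + N) \<le> (1 / sqrt K) * (min (u / (\<gamma> * sqrt K)) (v / sqrt \<gamma>) + sqrt T)"
proof -
  have Kp: "real K > 0" using K by simp
  have sK: "sqrt (real K) > 0" using Kp by simp
  let ?m = "min (u / (\<gamma> * sqrt K)) (v / sqrt \<gamma>)"
  have m0: "0 \<le> ?m" using u0 v0 g sK by simp
  have e1: "(u / (\<gamma> * sqrt K))^2 / K = u^2 / (\<gamma>^2 * K^2)"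
    using Kp g by (simp add: power_divide power_mult_distrib power2_eq_square)
  have e2: "(v / sqrt \<gamma>)^2 / K = v^2 / (\<gamma> * K)"
    using Kp g by (simp add: power_divide)
  have "sD \<le> ?m^2 / K"
  proof (cases "u / (\<gamma> * sqrt K) \<le> v / sqrt \<gamma>")
    case True thus ?thesis using d1 e1 by (simp add: min_def)
  next
    case False thus ?thesis using d2 e2 by (simp add: min_def)
  qed
  hence "sqrt sD \<le> sqrt (?m^2 / K)" by (rule real_sqrt_le_mono)
  also have "\<dots> = ?m / sqrt K" using m0 by (simp add: real_sqrt_divide)
  finally have s1: "sqrt sD \<le> ?m / sqrt K" .
  have "sqrt N \<le> sqrt (T / K)" using n by (rule real_sqrt_le_mono)
  also have "\<dots> = sqrt T / sqrt K" by (simp add: real_sqrt_divide)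
  finally have s2: "sqrt N \<le> sqrt T / sqrt K" .
  have "sqrt (sD + N) \<le> sqrt sD + sqrt N" by (rule sqrt_add_le_add_sqrt[OF sD0 N0])
  also have "\<dots> \<le> ?m / sqrt K + sqrt T / sqrt K" using s1 s2 by simp
  also have "\<dots> = (1 / sqrt K) * (?m + sqrt T)" by (simp add: add_divide_distrib)
  finally show ?thesis .
qed

theorem lemmaS3:
  fixes M :: "'a measure"
    and F :: "real^'n \<Rightarrow> real" and H :: "real^'n^'n" and b wstar :: "real^'n" and c :: real
    and \<xi> :: "nat \<Rightarrow> 'a \<Rightarrow> (real^'n \<Rightarrow> real^'n)"
    and \<A> \<gamma> :: real and \<eta>0 :: "real^'n" and K :: nat
  assumes "prob_space M"
    and F_quad: "\<forall>w. F w = (1/2) * (w \<bullet> (H *v w)) + b \<bullet> w + c"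
    and H_pd: "sym_pos_def H"
    and wstar_min: "\<forall>w. F wstar \<le> F w"
    and \<xi>_meas: "\<forall>k\<ge>1. \<xi> k \<in> measurable M (Pi\<^sub>M UNIV (\<lambda>_. borel))"
    and \<xi>_indep: "prob_space.indep_vars M (\<lambda>_. Pi\<^sub>M UNIV (\<lambda>_. borel)) \<xi> {1..}"
    and \<xi>_ident: "\<forall>k\<ge>1. distr M (Pi\<^sub>M UNIV (\<lambda>_. borel)) (\<xi> k) = distr M (Pi\<^sub>M UNIV (\<lambda>_. borel)) (\<xi> 1)"
    and \<xi>_centered: "\<forall>k\<ge>1. \<forall>z. integrable M (\<lambda>\<omega>. \<xi> k \<omega> z) \<and> (\<integral>\<omega>. \<xi> k \<omega> z \<partial>M) = 0"
    and A_int: "integrable M (\<lambda>\<omega>. (norm (\<xi> 1 \<omega> 0))\<^sup>2)"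
    and A_bound: "(\<integral>\<omega>. (norm (\<xi> 1 \<omega> 0))\<^sup>2 \<partial>M) \<le> \<A>"
    and "\<gamma> > 0" and "\<gamma> * trace H \<le> 1"
    and "K \<ge> 1"
  shows "sqrt (\<integral>\<omega>. (norm (msqrt H *v eta0_bar \<gamma> H (\<lambda>k \<omega>. \<xi> k \<omega> 0) \<eta>0 K \<omega>))\<^sup>2 \<partial>M)
    \<le> (1 / sqrt (real K)) *
       (min (norm (matrix_inv (msqrt H) *v \<eta>0) / (\<gamma> * sqrt (real K))) (norm \<eta>0 / sqrt \<gamma>)
        + sqrt (trace ((\<chi> i j. \<integral>\<omega>. (\<xi> 1 \<omega> 0 $ i) * (\<xi> 1 \<omega> 0 $ j) \<partial>M) ** matrix_inv H)))"
proof -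
  interpret prob_space M by (rule assms(1))
  obtain P :: "real^'n^'n" and l where P1: "P ** transpose P = mat 1" and P2: "transpose P ** P = mat 1"
    and Hm: "H = mf P l (\<lambda>x. x)" and lb: "\<forall>i. 0 < l i \<and> \<gamma> * l i \<le> 1"
    and sq: "msqrt H = mf P l sqrt" and isq: "matrix_inv (msqrt H) = mf P l (\<lambda>x. 1 / sqrt x)"
    and iH: "matrix_inv H = mf P l (\<lambda>x. 1 / x)"
    using spectral_setup[OF H_pd \<open>\<gamma> > 0\<close> \<open>\<gamma> * trace H \<le> 1\<close>] by blast
  have lpos: "0 < l i" and gl: "\<gamma> * l i \<le> 1" for i using lb by auto
  have g0: "\<gamma> > 0" and K1: "K \<ge> 1" by fact+
  have Kp: "real K > 0" using K1 by simp
  define c where "c = P *v \<eta>0"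
  define Y where "Y j i \<omega> = (P $ i) \<bullet> \<xi> j \<omega> 0" for j i \<omega>
  define J where "J = {1..<K}"
  define s where "s i = (\<Sum>k<K. (1 - \<gamma> * l i)^k)" for i
  define D where "D i = sqrt (l i) / K * s i * (P *v \<eta>0) $ i" for i
  define a where "a i j = sqrt (l i) * \<gamma> / K * (\<Sum>m<K - j. (1 - \<gamma> * l i)^m)" for i j
  define \<sigma> where "\<sigma> i = expectation (\<lambda>\<omega>. (Y 1 i \<omega>)^2)" for i
  have Pc: "(P *v v) $ i = (P $ i) \<bullet> v" for v i by (simp add: matrix_vector_mul_component)
  have Pn: "norm (P $ i) = 1" for i using row_norm[OF P1, of i] by (simp add: norm_eq_sqrt_inner)
  have coord: "(P *v (msqrt H *v eta0_bar \<gamma> H (\<lambda>k \<omega>. \<xi> k \<omega> 0) \<eta>0 K \<omega>)) $ i = D i + (\<Sum>j\<in>J. a i j * Y j i \<omega>)" for \<omega> i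
    using coordZ[OF P1 Hm sq, of \<gamma> "\<lambda>k \<omega>. \<xi> k \<omega> 0" \<eta>0 K \<omega> i]
    unfolding D_def s_def a_def J_def Y_def Pc by simp
  have normsq: "(norm (msqrt H *v eta0_bar \<gamma> H (\<lambda>k \<omega>. \<xi> k \<omega> 0) \<eta>0 K \<omega>))^2 = (\<Sum>i\<in>UNIV. (D i + (\<Sum>j\<in>J. a i j * Y j i \<omega>))^2)" for \<omega>
    by (simp only: norm_orth[OF P2] coord)
  have mx: "\<xi> j \<in> measurable M (Pi\<^sub>M UNIV (\<lambda>_. borel))" if "j \<ge> 1" for j using \<xi>_meas that by blast
  have mrow: "(\<lambda>f. p \<bullet> f 0) \<in> borel_measurable (Pi\<^sub>M UNIV (\<lambda>_::real^'n. (borel :: (real^'n) measure)))" for p :: "real^'n"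
    by (rule meas_row)
  have gmeas: "(\<lambda>f. ((P $ i) \<bullet> f 0)^2) \<in> borel_measurable (Pi\<^sub>M UNIV (\<lambda>_::real^'n. (borel :: (real^'n) measure)))" for i
    by (rule borel_measurable_power[OF mrow])
  have Ymeas: "Y j i \<in> borel_measurable M" if "j \<ge> 1" for j i
    unfolding Y_def using measurable_compose[OF mx[OF that] mrow[of "P $ i"]] by simp
  have Yint: "integrable M (Y j i)" if "j \<ge> 1" for j i
  proof -
    have "integrable M (\<lambda>\<omega>. \<xi> j \<omega> 0)" using \<xi>_centered that by blast
    thus ?thesis unfolding Y_def by simp
  qed
  have Ycen: "expectation (Y j i) = 0" if "j \<ge> 1" for j i
  proof -
    have "integrable M (\<lambda>\<omega>. \<xi> j \<omega> 0)" and "(\<integral>\<omega>. \<xi> j \<omega> 0 \<partial>M) = 0" using \<xi>_centered that by blast+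
    thus ?thesis unfolding Y_def by simp
  qed
  have Y1sq: "integrable M (\<lambda>\<omega>. (Y 1 i \<omega>)^2)" for i
  proof (rule Bochner_Integration.integrable_bound[OF A_int])
    show "(\<lambda>\<omega>. (Y 1 i \<omega>)^2) \<in> borel_measurable M" using Ymeas[of 1 i] by simp
    show "AE \<omega> in M. norm ((Y 1 i \<omega>)^2) \<le> norm ((norm (\<xi> 1 \<omega> 0))^2)"
    proof (rule AE_I2)
      fix \<omega>
      have "\<bar>Y 1 i \<omega>\<bar> \<le> norm (P $ i) * norm (\<xi> 1 \<omega> 0)" unfolding Y_def by (rule Cauchy_Schwarz_ineq2)
      hence "\<bar>Y 1 i \<omega>\<bar> \<le> norm (\<xi> 1 \<omega> 0)" using Pn by simp
      hence "\<bar>Y 1 i \<omega>\<bar>^2 \<le> (norm (\<xi> 1 \<omega> 0))^2" by (rule power_mono) simp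
      thus "norm ((Y 1 i \<omega>)^2) \<le> norm ((norm (\<xi> 1 \<omega> 0))^2)" by simp
    qed
  qed
  have Yjsq: "integrable M (\<lambda>\<omega>. (Y j i \<omega>)^2) \<and> expectation (\<lambda>\<omega>. (Y j i \<omega>)^2) = \<sigma> i" if j: "j \<ge> 1" for j i
  proof -
    let ?N = "Pi\<^sub>M UNIV (\<lambda>_::real^'n. (borel :: (real^'n) measure))"
    let ?g = "\<lambda>f. ((P $ i) \<bullet> f 0)^2"
    have dj: "distr M ?N (\<xi> j) = distr M ?N (\<xi> 1)" using \<xi>_ident j by blast
    have m1: "\<xi> 1 \<in> measurable M ?N" using mx by simp
    have "integrable M (\<lambda>\<omega>. ?g (\<xi> j \<omega>)) = integrable (distr M ?N (\<xi> j)) ?g"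
      by (rule integrable_distr_eq[symmetric, OF mx[OF j] gmeas])
    also have "\<dots> = integrable M (\<lambda>\<omega>. ?g (\<xi> 1 \<omega>))" unfolding dj by (rule integrable_distr_eq[OF m1 gmeas])
    finally have i1: "integrable M (\<lambda>\<omega>. (Y j i \<omega>)^2)" using Y1sq[of i] by (simp add: Y_def)
    have "expectation (\<lambda>\<omega>. ?g (\<xi> j \<omega>)) = integral\<^sup>L (distr M ?N (\<xi> j)) ?g"
      by (rule integral_distr[symmetric, OF mx[OF j] gmeas])
    also have "\<dots> = expectation (\<lambda>\<omega>. ?g (\<xi> 1 \<omega>))" unfolding dj by (rule integral_distr[OF m1 gmeas])
    finally show ?thesis using i1 by (simp add: Y_def \<sigma>_def)
  qed
  have indY: "indep_vars (\<lambda>_. borel) (\<lambda>j \<omega>. Y j i \<omega>) J" for i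
  proof -
    have "indep_vars (\<lambda>_. borel) (\<lambda>j \<omega>. (\<lambda>f. (P $ i) \<bullet> f 0) (\<xi> j \<omega>)) {1..}"
      by (rule indep_vars_compose2[OF \<xi>_indep]) (rule mrow)
    hence "indep_vars (\<lambda>_. borel) (\<lambda>j \<omega>. Y j i \<omega>) {1..}" by (simp add: Y_def)
    thus ?thesis by (rule indep_vars_subset) (auto simp: J_def)
  qed
  have Jge: "j \<ge> 1" if "j \<in> J" for j using that by (simp add: J_def)
  have Ei: "integrable M (\<lambda>\<omega>. (D i + (\<Sum>j\<in>J. a i j * Y j i \<omega>))^2) \<and>
     expectation (\<lambda>\<omega>. (D i + (\<Sum>j\<in>J. a i j * Y j i \<omega>))^2) = (D i)^2 + (\<Sum>j\<in>J. (a i j)^2 * \<sigma> i)" for i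
  proof -
    have fJ: "finite J" by (simp add: J_def)
    have i2: "\<And>j. j \<in> J \<Longrightarrow> integrable M (\<lambda>\<omega>. (Y j i \<omega>)^2)" using Yjsq Jge by blast
    have i1: "\<And>j. j \<in> J \<Longrightarrow> integrable M (\<lambda>\<omega>. Y j i \<omega>)" using Yint Jge by simp
    have ce: "\<And>j. j \<in> J \<Longrightarrow> expectation (\<lambda>\<omega>. Y j i \<omega>) = 0" using Ycen Jge by simp
    have "integrable M (\<lambda>\<omega>. (D i + (\<Sum>j\<in>J. a i j * Y j i \<omega>))^2) \<and>
      expectation (\<lambda>\<omega>. (D i + (\<Sum>j\<in>J. a i j * Y j i \<omega>))^2) = (D i)^2 + (\<Sum>j\<in>J. (a i j)^2 * expectation (\<lambda>\<omega>. (Y j i \<omega>)^2))"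
      by (rule sq_sum_indep[OF fJ indY i2 i1 ce])
    moreover have "(\<Sum>j\<in>J. (a i j)^2 * expectation (\<lambda>\<omega>. (Y j i \<omega>)^2)) = (\<Sum>j\<in>J. (a i j)^2 * \<sigma> i)"
      using Yjsq Jge by (intro sum.cong refl) auto
    ultimately show ?thesis by simp
  qed
  have LHS: "(\<integral>\<omega>. (norm (msqrt H *v eta0_bar \<gamma> H (\<lambda>k \<omega>. \<xi> k \<omega> 0) \<eta>0 K \<omega>))\<^sup>2 \<partial>M)
      = (\<Sum>i\<in>UNIV. (D i)^2) + (\<Sum>i\<in>UNIV. \<Sum>j\<in>J. (a i j)^2 * \<sigma> i)"
  proof -
    have "(\<integral>\<omega>. (norm (msqrt H *v eta0_bar \<gamma> H (\<lambda>k \<omega>. \<xi> k \<omega> 0) \<eta>0 K \<omega>))\<^sup>2 \<partial>M)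
        = expectation (\<lambda>\<omega>. \<Sum>i\<in>UNIV. (D i + (\<Sum>j\<in>J. a i j * Y j i \<omega>))^2)" by (simp only: normsq)
    also have "\<dots> = (\<Sum>i\<in>UNIV. expectation (\<lambda>\<omega>. (D i + (\<Sum>j\<in>J. a i j * Y j i \<omega>))^2))"
      by (rule Bochner_Integration.integral_sum) (use Ei in blast)
    also have "\<dots> = (\<Sum>i\<in>UNIV. (D i)^2 + (\<Sum>j\<in>J. (a i j)^2 * \<sigma> i))" using Ei by simp
    also have "\<dots> = (\<Sum>i\<in>UNIV. (D i)^2) + (\<Sum>i\<in>UNIV. \<Sum>j\<in>J. (a i j)^2 * \<sigma> i)" by (simp add: sum.distrib)
    finally show ?thesis .
  qed
  have sb: "0 \<le> s i \<and> s i \<le> 1 / (\<gamma> * l i) \<and> s i \<le> real K" for i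
    using geo_bounds[of "\<gamma> * l i" K] g0 lpos[of i] gl[of i] unfolding s_def by simp
  have Dsq1: "(D i)^2 \<le> ((P *v \<eta>0) $ i)^2 / (\<gamma>^2 * K^2 * l i)" for i
    unfolding D_def using D_bound(1)[OF lpos[of i] g0 K1, of "s i" "(P *v \<eta>0) $ i"] sb[of i] by simp
  have Dsq2: "(D i)^2 \<le> ((P *v \<eta>0) $ i)^2 / (\<gamma> * K)" for i
    unfolding D_def using D_bound(2)[OF lpos[of i] g0 K1, of "s i" "(P *v \<eta>0) $ i"] sb[of i] by simp
  have asq: "(a i j)^2 \<le> 1 / (l i * K^2)" for i j
  proof -
    have "0 \<le> (\<Sum>m<K - j. (1 - \<gamma> * l i)^m)" "(\<Sum>m<K - j. (1 - \<gamma> * l i)^m) \<le> 1 / (\<gamma> * l i)"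
      using geo_bounds[of "\<gamma> * l i" "K - j"] g0 lpos[of i] gl[of i] by simp_all
    thus ?thesis unfolding a_def using a_bound[OF lpos[of i] g0 K1] by simp
  qed
  have \<sigma>0: "0 \<le> \<sigma> i" for i unfolding \<sigma>_def by simp
  have u2: "(norm (matrix_inv (msqrt H) *v \<eta>0))^2 = (\<Sum>i\<in>UNIV. ((P *v \<eta>0) $ i)^2 / l i)"
  proof -
    have "(norm (matrix_inv (msqrt H) *v \<eta>0))^2 = (\<Sum>i\<in>UNIV. ((P *v (mf P l (\<lambda>x. 1 / sqrt x) *v \<eta>0)) $ i)^2)"
      unfolding isq by (rule norm_orth[OF P2])
    also have "\<dots> = (\<Sum>i\<in>UNIV. ((P *v \<eta>0) $ i)^2 / l i)"
      by (rule sum.cong[OF refl]) (simp add: mf_coord[OF P1] power_divide less_imp_le[OF lpos])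
    finally show ?thesis .
  qed
  have v2: "(norm \<eta>0)^2 = (\<Sum>i\<in>UNIV. ((P *v \<eta>0) $ i)^2)" by (rule norm_orth[OF P2])
  define C where "C = (\<chi> i j. \<integral>\<omega>. (\<xi> 1 \<omega> 0 $ i) * (\<xi> 1 \<omega> 0 $ j) \<partial>M)"
  have Cint: "integrable M (\<lambda>\<omega>. (\<xi> 1 \<omega> 0 $ p) * (\<xi> 1 \<omega> 0 $ q))" for p q
  proof (rule Bochner_Integration.integrable_bound[OF A_int])
    show "(\<lambda>\<omega>. (\<xi> 1 \<omega> 0 $ p) * (\<xi> 1 \<omega> 0 $ q)) \<in> borel_measurable M"
      using measurable_compose[OF mx[of 1] meas_comp[of p q]] by simp
    show "AE \<omega> in M. norm ((\<xi> 1 \<omega> 0 $ p) * (\<xi> 1 \<omega> 0 $ q)) \<le> norm ((norm (\<xi> 1 \<omega> 0))^2)"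
    proof (rule AE_I2)
      fix \<omega>
      have "\<bar>\<xi> 1 \<omega> 0 $ p\<bar> * \<bar>\<xi> 1 \<omega> 0 $ q\<bar> \<le> norm (\<xi> 1 \<omega> 0) * norm (\<xi> 1 \<omega> 0)"
        by (intro mult_mono component_le_norm_cart) auto
      thus "norm ((\<xi> 1 \<omega> 0 $ p) * (\<xi> 1 \<omega> 0 $ q)) \<le> norm ((norm (\<xi> 1 \<omega> 0))^2)"
        by (simp add: abs_mult power2_eq_square)
    qed
  qed
  have Cint': "integrable M (\<lambda>\<omega>. (\<xi> (Suc 0) \<omega> 0 $ p) * (\<xi> (Suc 0) \<omega> 0 $ q))" for p q
    using Cint[of p q] by simp
  have sig: "\<sigma> i = (\<Sum>p\<in>UNIV. \<Sum>q\<in>UNIV. P $ i $ p * P $ i $ q * C $ p $ q)" for i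
  proof -
    have "(Y 1 i \<omega>)^2 = (\<Sum>p\<in>UNIV. \<Sum>q\<in>UNIV. (P $ i $ p * P $ i $ q) * ((\<xi> 1 \<omega> 0 $ p) * (\<xi> 1 \<omega> 0 $ q)))" for \<omega>
      unfolding Y_def inner_vec_def power2_eq_square sum_product by (simp add: mult_ac)
    hence "\<sigma> i = expectation (\<lambda>\<omega>. \<Sum>p\<in>UNIV. \<Sum>q\<in>UNIV. (P $ i $ p * P $ i $ q) * ((\<xi> 1 \<omega> 0 $ p) * (\<xi> 1 \<omega> 0 $ q)))"
      unfolding \<sigma>_def by simp
    also have "\<dots> = (\<Sum>p\<in>UNIV. expectation (\<lambda>\<omega>. \<Sum>q\<in>UNIV. (P $ i $ p * P $ i $ q) * ((\<xi> 1 \<omega> 0 $ p) * (\<xi> 1 \<omega> 0 $ q))))"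
      by (rule Bochner_Integration.integral_sum, rule Bochner_Integration.integrable_sum) (simp add: Cint Cint')
    also have "\<dots> = (\<Sum>p\<in>UNIV. \<Sum>q\<in>UNIV. expectation (\<lambda>\<omega>. (P $ i $ p * P $ i $ q) * ((\<xi> 1 \<omega> 0 $ p) * (\<xi> 1 \<omega> 0 $ q))))"
      by (rule sum.cong[OF refl], rule Bochner_Integration.integral_sum) (simp add: Cint Cint')
    also have "\<dots> = (\<Sum>p\<in>UNIV. \<Sum>q\<in>UNIV. P $ i $ p * P $ i $ q * C $ p $ q)"
      by (simp add: C_def)
    finally show ?thesis .
  qed
  have trC: "trace (C ** matrix_inv H) = (\<Sum>i\<in>UNIV. \<sigma> i / l i)"
  proof -
    have "trace (C ** matrix_inv H) = trace (C ** (transpose P ** dmat (\<lambda>i. 1 / l i) ** P))"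
      unfolding iH mf_def ..
    also have "\<dots> = trace ((C ** transpose P ** dmat (\<lambda>i. 1 / l i)) ** P)" by (simp only: matrix_mul_assoc)
    also have "\<dots> = trace (P ** (C ** transpose P ** dmat (\<lambda>i. 1 / l i)))" by (rule trace_mul_sym)
    also have "\<dots> = trace ((P ** C ** transpose P) ** dmat (\<lambda>i. 1 / l i))" by (simp only: matrix_mul_assoc)
    also have "\<dots> = (\<Sum>i\<in>UNIV. (P ** C ** transpose P) $ i $ i * (1 / l i))" by (rule trace_dmat)
    also have "\<dots> = (\<Sum>i\<in>UNIV. \<sigma> i / l i)"
    proof (rule sum.cong[OF refl])
      fix i
      have "(P ** C ** transpose P) $ i $ i = (\<Sum>q\<in>UNIV. (\<Sum>p\<in>UNIV. P $ i $ p * C $ p $ q) * P $ i $ q)"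
        by (simp add: matrix_matrix_mult_def transpose_def)
      also have "\<dots> = (\<Sum>q\<in>UNIV. \<Sum>p\<in>UNIV. P $ i $ p * P $ i $ q * C $ p $ q)"
        by (simp add: sum_distrib_left sum_distrib_right mult_ac)
      also have "\<dots> = \<sigma> i" unfolding sig by (rule sum.swap)
      finally show "(P ** C ** transpose P) $ i $ i * (1 / l i) = \<sigma> i / l i" by simp
    qed
    finally show ?thesis .
  qed
  let ?u = "norm (matrix_inv (msqrt H) *v \<eta>0)"
  let ?v = "norm \<eta>0"
  let ?T = "trace (C ** matrix_inv H)"
  let ?sD = "\<Sum>i\<in>UNIV. (D i)^2"
  let ?N = "\<Sum>i\<in>UNIV. \<Sum>j\<in>J. (a i j)^2 * \<sigma> i"
  have d1: "?sD \<le> ?u^2 / (\<gamma>^2 * K^2)"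
  proof -
    have "?sD \<le> (\<Sum>i\<in>UNIV. ((P *v \<eta>0) $ i)^2 / (\<gamma>^2 * K^2 * l i))" by (rule sum_mono) (rule Dsq1)
    also have "\<dots> = ?u^2 / (\<gamma>^2 * K^2)" unfolding u2 sum_divide_distrib by (rule sum.cong) (auto simp: field_simps)
    finally show ?thesis .
  qed
  have d2: "?sD \<le> ?v^2 / (\<gamma> * K)"
  proof -
    have "?sD \<le> (\<Sum>i\<in>UNIV. ((P *v \<eta>0) $ i)^2 / (\<gamma> * K))" by (rule sum_mono) (rule Dsq2)
    also have "\<dots> = ?v^2 / (\<gamma> * K)" unfolding v2 sum_divide_distrib ..
    finally show ?thesis .
  qed
  have nb: "?N \<le> ?T / K"
  proof -
    have "?N \<le> (\<Sum>i\<in>UNIV. \<Sum>j\<in>J. 1 / (l i * K^2) * \<sigma> i)"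
      by (intro sum_mono mult_right_mono asq \<sigma>0)
    also have "\<dots> = (\<Sum>i\<in>UNIV. real (card J) * (\<sigma> i / (l i * K^2)))" by simp
    also have "\<dots> \<le> (\<Sum>i\<in>UNIV. \<sigma> i / l i / K)"
    proof (rule sum_mono)
      fix i
      have cJ: "real (card J) \<le> real K" by (simp add: J_def)
      have "real (card J) * (\<sigma> i / (l i * K^2)) \<le> real K * (\<sigma> i / (l i * K^2))"
        by (rule mult_right_mono[OF cJ]) (simp add: \<sigma>0 less_imp_le[OF lpos])
      also have "\<dots> = \<sigma> i / l i / K" using Kp by (simp add: power2_eq_square field_simps)
      finally show "real (card J) * (\<sigma> i / (l i * K^2)) \<le> \<sigma> i / l i / K" .
    qed
    also have "\<dots> = ?T / K" unfolding trC sum_divide_distrib ..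
    finally show ?thesis .
  qed
  have sD0: "0 \<le> ?sD" by (simp add: sum_nonneg)
  have N0: "0 \<le> ?N" by (simp add: sum_nonneg \<sigma>0)
  have T0: "0 \<le> ?T" unfolding trC by (simp add: sum_nonneg \<sigma>0 less_imp_le[OF lpos])
  have "sqrt (?sD + ?N) \<le> (1 / sqrt K) * (min (?u / (\<gamma> * sqrt K)) (?v / sqrt \<gamma>) + sqrt ?T)"
    by (rule final_ineq[OF K1 g0 sD0 N0 T0 _ _ d1 d2 nb]) simp_all
  thus ?thesis unfolding LHS C_def .
qed

end
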